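(* Let $x,y\in\{0,1\}^\infty$ be independent sequences, both with randomness rate $\tau>0$; let $0<\sigma<\tau$, $0<\sigma'<\tau-\sigma$, $b=\lceil(1-\sigma)/\sigma'\rceil$, let $a$ be a positive integer, and let $t_0=0$, $t_1=a$, $t_i=b(t_1+\cdots+t_{i-1})$ for $i\ge2$. Let $\bar{x}_i=x(1:t_i)$ and $\bar{y}_i=y(1:t_i)$. Then there is a constant $c$ such that for all $i,j\ge1$: (a) $\big|K(\bar{y}_i\bar{x}_j)-\big(K(\bar{y}_i)+K(\bar{x}_j)\big)\big|\le c(i+j)$; (b) $\big|K(\bar{x}_i\bar{y}_j)-\big(K(\bar{x}_i)+K(\bar{y}_j)\big)\big|\le c(i+j)$.
   Context: $x(n_1:n_2)$ denotes bits $n_1$ through $n_2$ of $x$ (indexed from 1); juxtaposition is concatenation. $K(u)$ is plain Kolmogorov complexity with respect to a fixed universal machine. A sequence has randomness rate $\tau$ if $K(x(1:n))\ge\tau n$ for all but finitely many $n$. Sequences $x,y$ are independent if there is a constant $c_0$ with $K(x(1:n)y(1:m))\ge K(x(1:n))+K(y(1:m))-c_0(1+\log n+\log m)$ for all $n,m\ge1$. *)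

theory Defs
  imports Complex_Main
begin

datatype recf = Zr | Sc | Id nat | Cn recf "recf list" | Pr recf recf | Mn recf

inductive eval :: "recf \<Rightarrow> nat list \<Rightarrow> nat \<Rightarrow> bool" where
  zero: "eval Zr xs 0"
| suc:  "eval Sc (x # xs) (Suc x)"
| proj: "i < length xs \<Longrightarrow> eval (Id i) xs (xs ! i)"
| comp: "list_all2 (\<lambda>g y. eval g xs y) gs ys \<Longrightarrow> eval f ys z \<Longrightarrow> eval (Cn f gs) xs z"
| pr0:  "eval f xs y \<Longrightarrow> eval (Pr f g) (0 # xs) y"
| prS:  "eval (Pr f g) (k # xs) y \<Longrightarrow> eval g (k # y # xs) z \<Longrightarrow> eval (Pr f g) (Suc k # xs) z"
| mn:   "eval f (k # xs) 0 \<Longrightarrow> (\<forall>i<k. \<exists>y. y > 0 \<and> eval f (i # xs) y) \<Longrightarrow> eval (Mn f) xs k"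

text \<open>Bijective encoding of binary strings by natural numbers.\<close>
fun enc :: "bool list \<Rightarrow> nat" where
  "enc [] = 0"
| "enc (b # w) = 2 * enc w + (if b then 2 else 1)"

definition partial_computable :: "(bool list \<Rightarrow> bool list option) \<Rightarrow> bool" where
  "partial_computable V \<longleftrightarrow>
     (\<exists>f. \<forall>p v. eval f [enc p] (enc v) \<longleftrightarrow> V p = Some v)"

definition universal :: "(bool list \<Rightarrow> bool list option) \<Rightarrow> bool" where
  "universal U \<longleftrightarrow> partial_computable U \<and>
     (\<forall>V. partial_computable V \<longrightarrow>
        (\<exists>c. \<forall>p x. V p = Some x \<longrightarrow> (\<exists>q. U q = Some x \<and> length q \<le> length p + c)))"

definition KC :: "(bool list \<Rightarrow> bool list option) \<Rightarrow> bool list \<Rightarrow> nat" where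
  "KC U x = (LEAST n. \<exists>p. length p = n \<and> U p = Some x)"

text \<open>x(1:n) for a sequence indexed from 1 (bit x 0 is ignored).\<close>
definition pre :: "(nat \<Rightarrow> bool) \<Rightarrow> nat \<Rightarrow> bool list" where
  "pre x n = map x [1..<Suc n]"

definition has_rate :: "(bool list \<Rightarrow> bool list option) \<Rightarrow> (nat \<Rightarrow> bool) \<Rightarrow> real \<Rightarrow> bool" where
  "has_rate U x \<tau> \<longleftrightarrow> (\<forall>\<^sub>F n in sequentially. real (KC U (pre x n)) \<ge> \<tau> * real n)"

definition indep :: "(bool list \<Rightarrow> bool list option) \<Rightarrow> (nat \<Rightarrow> bool) \<Rightarrow> (nat \<Rightarrow> bool) \<Rightarrow> bool" where
  "indep U x y \<longleftrightarrow> (\<exists>c0::real. \<forall>n m. n \<ge> 1 \<longrightarrow> m \<ge> 1 \<longrightarrow>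
     real (KC U (pre x n @ pre y m)) \<ge> real (KC U (pre x n)) + real (KC U (pre y m))
        - c0 * (1 + log 2 (real n) + log 2 (real m)))"

end

theory Submission
  imports Defs
begin


lemma list_all2_det:
  "list_all2 (\<lambda>g y. eval g xs y \<and> (\<forall>z. eval g xs z \<longrightarrow> y = z)) gs ys \<Longrightarrow>
   list_all2 (\<lambda>g y. eval g xs y) gs ys' \<Longrightarrow> ys = ys'"
proof (induction gs arbitrary: ys ys')
  case Nil then show ?case by simp
next
  case (Cons g gs)
  then obtain y ys0 y' ys0' where "ys = y # ys0" "ys' = y' # ys0'" 
    by (auto simp: list_all2_Cons1)
  with Cons show ?case by auto
qed

inductive_cases PrE: "eval (Pr f g) (k # xs) y"
inductive_cases CnE: "eval (Cn f gs) xs y"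
inductive_cases MnE: "eval (Mn f) xs y"

lemma eval_det: "eval f xs y \<Longrightarrow> eval f xs w \<Longrightarrow> y = w"
proof (induction arbitrary: w rule: eval.induct)
  case (zero xs) then show ?case by (auto elim: eval.cases)
next
  case (suc x xs) then show ?case by (auto elim: eval.cases)
next
  case (proj i xs) then show ?case by (auto elim: eval.cases)
next
  case (comp xs gs ys f z)
  from comp.prems obtain ys' where a: "list_all2 (\<lambda>g y. eval g xs y) gs ys'" and b: "eval f ys' w"
    by (rule CnE) auto
  have "list_all2 (\<lambda>g y. eval g xs y \<and> (\<forall>z. eval g xs z \<longrightarrow> y = z)) gs ys"
    using comp.IH(1) by (rule list_all2_mono) auto
  then have "ys = ys'" using list_all2_det a by blast
  then show ?case using comp.IH(2) b by simp
next
  case (pr0 f xs y g)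
  from pr0.prems have "eval f xs w" by (rule PrE) auto
  then show ?case using pr0.IH by simp
next
  case (prS f g k xs y z)
  from prS.prems obtain y' where a: "eval (Pr f g) (k # xs) y'" and b: "eval g (k # y' # xs) w"
    by (rule PrE) auto
  have "y = y'" using prS.IH(1) a by simp
  then show ?case using prS.IH(2) b by simp
next
  case (mn f k xs)
  from mn.prems obtain k' where k': "eval f (k' # xs) 0" "\<forall>i<k'. \<exists>y>0. eval f (i # xs) y" and "w = k'"
    by (rule MnE) auto
  show ?case
  proof (rule ccontr)
    assume "k \<noteq> w"
    then consider "k < k'" | "k' < k" using \<open>w = k'\<close> by linarith
    then show False
    proof cases
      case 1
      then obtain y where "y > 0" "eval f (k # xs) y" using k' by blast
      with mn.IH(1) show False by auto
    next
      case 2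
      then obtain y where "y > 0" "eval f (k' # xs) y" "\<forall>z. eval f (k' # xs) z \<longrightarrow> y = z"
        using mn.IH(2) by blast
      with k' show False by auto
    qed
  qed
qed

lemma enc_inj: "enc u = enc v \<Longrightarrow> u = v"
proof (induction u arbitrary: v)
  case Nil then show ?case by (cases v) (auto split: if_splits)
next
  case (Cons b u)
  then obtain b' v' where v: "v = b' # v'" by (cases v) (auto split: if_splits)
  have ne: "2 * (x::nat) + 2 \<noteq> 2 * y + 1" for x y by presburger
  have "b = b'" using Cons.prems ne unfolding v by (auto split: if_splits) (metis ne)+
  then show ?case using Cons unfolding v by auto
qed

lemma enc_append: "enc (u @ v) = enc u + 2 ^ length u * enc v"
  by (induction u) auto

lemma enc_lower: "2 ^ length s \<le> enc s + 1"
  by (induction s) auto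

lemma enc_surj: "\<exists>s. enc s = n"
proof (induction n rule: less_induct)
  case (less n)
  show ?case
  proof (cases "n = 0")
    case True then show ?thesis by (intro exI[of _ "[]"]) simp
  next
    case False
    then have "(n - 1) div 2 < n" by simp
    then obtain s where s: "enc s = (n - 1) div 2" using less by blast
    show ?thesis
    proof (cases "odd n")
      case True
      then have "2 * ((n - 1) div 2) + 1 = n" by presburger
      then show ?thesis using s by (intro exI[of _ "False # s"]) simp
    next
      case F: False
      then have "2 * ((n - 1) div 2) + 2 = n" using False by presburger
      then show ?thesis using s by (intro exI[of _ "True # s"]) simp
    qed
  qed
qed

lemma enc_zero: "enc w = 0 \<longleftrightarrow> w = []"
  by (cases w) auto

lemma enc_tl: "enc (tl w) = (enc w - 1) div 2"
  by (cases w) auto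



lemma cn1: "eval g xs y \<Longrightarrow> eval f [y] z \<Longrightarrow> eval (Cn f [g]) xs z"
  by (rule eval.comp[of _ _ "[y]"]) auto
lemma cn2: "eval g1 xs y1 \<Longrightarrow> eval g2 xs y2 \<Longrightarrow> eval f [y1, y2] z \<Longrightarrow> eval (Cn f [g1, g2]) xs z"
  by (rule eval.comp[of _ _ "[y1, y2]"]) auto
lemma zeroI: "y = 0 \<Longrightarrow> eval Zr xs y" using eval.zero by simp
lemma sucI: "y = Suc x \<Longrightarrow> eval Sc (x # xs) y" using eval.suc by simp
lemma id0I: "y = x \<Longrightarrow> eval (Id 0) (x # xs) y" using eval.proj[of 0 "x # xs"] by simp
lemma id1I: "y = x \<Longrightarrow> eval (Id 1) (x0 # x # xs) y" using eval.proj[of 1 "x0 # x # xs"] by simp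
lemma id1I': "y = x \<Longrightarrow> eval (Id (Suc 0)) (x0 # x # xs) y" using eval.proj[of 1 "x0 # x # xs"] by simp
lemma id2I': "y = x \<Longrightarrow> eval (Id (Suc (Suc 0))) (x0 # x1 # x # xs) y" using eval.proj[of "Suc (Suc 0)" "x0 # x1 # x # xs"] by simp
lemma id2I: "y = x \<Longrightarrow> eval (Id 2) (x0 # x1 # x # xs) y" using eval.proj[of 2 "x0 # x1 # x # xs"] by simp

lemma pr_eval:
  assumes "eval f xs (R 0)" "\<And>k. eval g (k # R k # xs) (R (Suc k))"
  shows "eval (Pr f g) (k # xs) (R k)"
  by (induction k) (auto intro: eval.pr0 eval.prS assms)

lemma mn_eval:
  assumes "\<And>i. eval f (i # xs) (T i)" "T k = 0" "\<And>i. i < k \<Longrightarrow> T i > 0"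
  shows "eval (Mn f) xs k"
proof (rule eval.mn)
  show "eval f (k # xs) 0" using assms(1)[of k] assms(2) by simp
  show "\<forall>i<k. \<exists>y>0. eval f (i # xs) y" using assms(1,3) by blast
qed

definition "c1 = Cn Sc [Zr]"
lemma c1I: "y = 1 \<Longrightarrow> eval c1 xs y" unfolding c1_def by (auto intro!: id1I' id2I' cn1 zeroI sucI)

definition "pred = Pr Zr (Id 0)"
lemma predI: assumes "y = k - 1" shows "eval pred [k] y"
proof -
  have "eval (Pr Zr (Id 0)) (k # []) ((\<lambda>k. k - 1) k)"
    by (rule pr_eval) (auto intro!: id1I' id2I' zeroI id0I id1I' id2I')
  then show ?thesis unfolding pred_def using assms by simp
qed

definition "subR = Pr (Id 0) (Cn pred [Id 1])"
lemma subRI: assumes "z = x - y" shows "eval subR [y, x] z"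
proof -
  have "eval (Pr (Id 0) (Cn pred [Id 1])) (y # [x]) ((\<lambda>k. x - k) y)"
    by (rule pr_eval) (auto intro!: id1I' id2I' id0I cn1 id1I predI id1I' id2I')
  then show ?thesis unfolding subR_def using assms by simp
qed

definition "sub = Cn subR [Id 1, Id 0]"
lemma subI: "z = x - y \<Longrightarrow> eval sub [x, y] z"
  unfolding sub_def by (auto intro!: id1I' id2I' cn2 id1I id0I subRI)

definition "add = Pr (Id 0) (Cn Sc [Id 1])"
lemma addI: assumes "z = k + x" shows "eval add [k, x] z"
proof -
  have "eval (Pr (Id 0) (Cn Sc [Id 1])) (k # [x]) ((\<lambda>k. k + x) k)"
    by (rule pr_eval) (auto intro!: id1I' id2I' id0I cn1 id1I sucI id1I' id2I')
  then show ?thesis unfolding add_def using assms by simp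
qed

definition "mul = Pr Zr (Cn add [Id 1, Id 2])"
lemma mulI: assumes "z = k * x" shows "eval mul [k, x] z"
proof -
  have "eval (Pr Zr (Cn add [Id 1, Id 2])) (k # [x]) ((\<lambda>k. k * x) k)"
    by (rule pr_eval) (auto intro!: id1I' id2I' zeroI cn2 id1I id2I addI id1I' id2I')
  then show ?thesis unfolding mul_def using assms by simp
qed

definition "pow2 = Pr c1 (Cn add [Id 1, Id 1])"
lemma pow2I: assumes "z = 2 ^ k" shows "eval pow2 [k] z"
proof -
  have "eval (Pr c1 (Cn add [Id 1, Id 1])) (k # []) ((\<lambda>k. 2 ^ k) k)"
    by (rule pr_eval) (auto intro!: id1I' id2I' c1I cn2 id1I addI id1I' id2I')
  then show ?thesis unfolding pow2_def using assms by simp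
qed

definition "tlt = Cn sub [Id 1, Cn Sc [Cn Sc [Cn add [Id 0, Id 0]]]]"
lemma tltI: "z = n - Suc (Suc (m + m)) \<Longrightarrow> eval tlt [m, n] z"
  unfolding tlt_def by (auto intro!: id1I' id2I' cn2 cn1 id1I id0I addI sucI subI)

definition "tlp = Mn tlt"
definition "tln n = (n - 1) div 2"
lemma tlpI: "z = tln n \<Longrightarrow> eval tlp [n] z"
  unfolding tlp_def tln_def
  by (auto intro!: id1I' id2I' mn_eval[where T="\<lambda>m. n - Suc (Suc (m + m))"] tltI)



lemma enc_pos: "w \<noteq> [] \<Longrightarrow> 0 < enc w" by (cases w) auto

lemma tln_enc: "tln (enc w) = enc (tl w)"
  unfolding tln_def by (simp add: enc_tl)

definition "itr = Pr (Id 0) (Cn tlp [Id 1])"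
lemma itrI: assumes "z = (tln ^^ L) n" shows "eval itr [L, n] z"
proof -
  have "eval (Pr (Id 0) (Cn tlp [Id 1])) (L # [n]) ((\<lambda>k. (tln ^^ k) n) L)"
    by (rule pr_eval) (auto intro!: id0I cn1 id1I' tlpI)
  then show ?thesis unfolding itr_def using assms by simp
qed

lemma funpow_tln: "(tln ^^ L) (enc w) = enc (drop L w)"
proof (induction L arbitrary: w)
  case 0 then show ?case by simp
next
  case (Suc L)
  have "(tln ^^ Suc L) (enc w) = (tln ^^ L) (tln (enc w))" by (simp add: funpow_Suc_right del: funpow.simps)
  also have "\<dots> = enc (drop L (tl w))" by (simp add: tln_enc Suc)
  finally show ?case by (simp add: drop_Suc)
qed

lemma itrI': assumes "z = enc (drop L w)" shows "eval itr [L, enc w] z"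
  using assms by (intro itrI) (simp add: funpow_tln)

definition "lenp = Mn itr"
lemma lenpI: assumes "z = length u" shows "eval lenp [enc u] z"
  unfolding lenp_def assms
  by (rule mn_eval[where T="\<lambda>i. enc (drop i u)"]) (auto intro!: itrI' enc_pos simp: enc_zero)

definition "dig = Cn sub [Id 0, Cn add [tlp, tlp]]"
lemma digI: assumes "z = n - (tln n + tln n)" shows "eval dig [n] z"
  unfolding dig_def assms by (auto intro!: cn2 id0I addI tlpI subI)

lemma dig_enc: "enc (b # w) - (tln (enc (b # w)) + tln (enc (b # w))) = (if b then 2 else 1)"
  by (simp add: tln_def)

definition "neq = Cn add [sub, Cn sub [Id 1, Id 0]]"
lemma neqI: assumes "z = (a - b) + (b - a)" shows "eval neq [a, b] z"
  unfolding neq_def assms by (auto intro!: cn2 id0I id1I' addI subI)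

definition "onesv k N = (let d = (tln ^^ k) N - (tln ((tln ^^ k) N) + tln ((tln ^^ k) N)) in (d - 1) + (1 - d))"
definition "onest = Cn neq [Cn dig [itr], c1]"
lemma onestI: assumes "z = onesv k N"
  shows "eval onest [k, N] z"
  unfolding onest_def assms onesv_def Let_def by (auto intro!: cn2 cn1 itrI digI c1I neqI)

definition "ones = Mn onest"
lemma onesI: assumes "z = k" shows "eval ones [enc (replicate k True @ False # r)] z"
  unfolding ones_def assms
proof (rule mn_eval[where T="\<lambda>i. onesv i (enc (replicate k True @ False # r))"])
  let ?w = "replicate k True @ False # r"
  show "eval onest [i, enc ?w] (onesv i (enc ?w))" for i by (rule onestI) simp
  show "onesv k (enc ?w) = 0"
  proof -
    have d: "drop k ?w = False # r" by simp
    show ?thesis unfolding onesv_def funpow_tln d dig_enc Let_def by simp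
  qed
  fix i assume "i < k"
  then have d: "drop i ?w = True # drop (Suc i) ?w"
    by (simp add: Cons_nth_drop_Suc nth_append Suc_diff_Suc[symmetric])
  show "0 < onesv i (enc ?w)"
    unfolding onesv_def funpow_tln Let_def d dig_enc by simp
qed

lemma enc_take: "enc (take L w) = enc w - 2 ^ L * enc (drop L w)"
proof (cases "L \<le> length w")
  case True
  have "enc w = enc (take L w @ drop L w)" by simp
  also have "\<dots> = enc (take L w) + 2 ^ length (take L w) * enc (drop L w)" by (rule enc_append)
  also have "\<dots> = enc (take L w) + 2 ^ L * enc (drop L w)" using True by simp
  finally show ?thesis by simp
next
  case False then show ?thesis by simp
qed

definition "takep = Cn sub [Id 1, Cn mul [Cn pow2 [Id 0], itr]]"
lemma takepI: assumes "z = enc (take L w)" shows "eval takep [L, enc w] z"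
  unfolding takep_def assms enc_take by (auto intro!: cn2 cn1 id0I id1I' pow2I mulI itrI' subI)

definition "catp = Cn add [Id 0, Cn mul [Cn pow2 [Cn lenp [Id 0]], Id 1]]"
lemma catpI: assumes "z = enc (u @ v)" shows "eval catp [enc u, enc v] z"
  unfolding catp_def assms enc_append by (auto intro!: cn2 cn1 id0I id1I' pow2I mulI lenpI addI)



definition "N1p = Cn itr [Cn Sc [ones], Id 0]"
definition "np = Cn takep [ones, N1p]"
definition "N2p = Cn itr [ones, N1p]"

lemma N1pI: assumes "k = length s" "z = enc (s @ r)"
  shows "eval N1p [enc (replicate k True @ False # s @ r)] z"
  unfolding N1p_def assms(2) by (auto intro!: cn2 cn1 sucI onesI id0I itrI')

lemma npI: assumes "k = length s" "z = enc s"
  shows "eval np [enc (replicate k True @ False # s @ r)] z"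
  unfolding np_def assms(2) using assms(1) by (auto intro!: cn2 onesI N1pI takepI)

lemma N2pI: assumes "k = length s" "z = enc r"
  shows "eval N2p [enc (replicate k True @ False # s @ r)] z"
  unfolding N2p_def assms(2) using assms(1) by (auto intro!: cn2 onesI N1pI itrI')

definition "Pp = Cn takep [np, N2p]"
definition "Qp = Cn itr [np, N2p]"
definition "Fcat fU = Cn catp [Cn fU [Pp], Cn fU [Qp]]"

lemma FcatI:
  assumes "k = length s" "enc s = length p" "eval fU [enc p] (enc u)" "eval fU [enc q] (enc v)"
  shows "eval (Fcat fU) [enc (replicate k True @ False # s @ p @ q)] (enc (u @ v))"
proof -
  have P: "eval Pp [enc (replicate k True @ False # s @ p @ q)] (enc p)"
    unfolding Pp_def using assms(1,2) by (auto intro!: cn2 npI N2pI takepI)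
  have Q: "eval Qp [enc (replicate k True @ False # s @ p @ q)] (enc q)"
    unfolding Qp_def using assms(1,2) by (auto intro!: cn2 npI N2pI itrI')
  show ?thesis unfolding Fcat_def
    by (rule cn2[OF cn1[OF P assms(3)] cn1[OF Q assms(4)]]) (rule catpI, rule refl)
qed

definition "Zp fU = Cn fU [N2p]"
definition "Gsw fU = Cn catp [Cn itr [np, Zp fU], Cn takep [np, Zp fU]]"

lemma GswI:
  assumes "k = length s" "enc s = length v" "eval fU [enc r] (enc (v @ u))"
  shows "eval (Gsw fU) [enc (replicate k True @ False # s @ r)] (enc (u @ v))"
proof -
  have Z: "eval (Zp fU) [enc (replicate k True @ False # s @ r)] (enc (v @ u))"
    unfolding Zp_def using assms by (auto intro!: cn1 N2pI)
  have A: "eval (Cn itr [np, Zp fU]) [enc (replicate k True @ False # s @ r)] (enc u)"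
    by (rule cn2[OF npI[OF assms(1) refl] Z]) (rule itrI', simp add: assms(2))
  have B: "eval (Cn takep [np, Zp fU]) [enc (replicate k True @ False # s @ r)] (enc v)"
    by (rule cn2[OF npI[OF assms(1) refl] Z]) (rule takepI, simp add: assms(2))
  show ?thesis unfolding Gsw_def
    by (rule cn2[OF A B]) (rule catpI, rule refl)
qed

lemma recf_machine:
  assumes "universal U"
  shows "\<exists>c. \<forall>w v. eval F [enc w] (enc v) \<longrightarrow> (\<exists>q. U q = Some v \<and> length q \<le> length w + c)"
proof -
  define V where "V w = (if \<exists>v. eval F [enc w] (enc v) then Some (THE v. eval F [enc w] (enc v)) else None)" for w
  have uniq: "eval F [enc w] (enc v) \<Longrightarrow> eval F [enc w] (enc v') \<Longrightarrow> v = v'" for w v v'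
    using eval_det enc_inj by blast
  have V: "V w = Some v \<longleftrightarrow> eval F [enc w] (enc v)" for w v
  proof
    assume "V w = Some v"
    then have ex: "\<exists>v. eval F [enc w] (enc v)" and v: "v = (THE v. eval F [enc w] (enc v))"
      unfolding V_def by (auto split: if_splits)
    from ex obtain v0 where v0: "eval F [enc w] (enc v0)" by blast
    then have "eval F [enc w] (enc (THE v. eval F [enc w] (enc v)))"
      by (rule theI) (use uniq v0 in blast)
    then show "eval F [enc w] (enc v)" using v by simp
  next
    assume e: "eval F [enc w] (enc v)"
    then have "(THE v. eval F [enc w] (enc v)) = v" by (rule the_equality) (use uniq e in blast)
    then show "V w = Some v" unfolding V_def using e by auto
  qed
  have "partial_computable V" unfolding partial_computable_def using V by blast
  with assms obtain c where "\<forall>p x. V p = Some x \<longrightarrow> (\<exists>q. U q = Some x \<and> length q \<le> length p + c)"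
    unfolding universal_def by blast
  then show ?thesis using V by blast
qed

lemma KC_le: "U q = Some x \<Longrightarrow> KC U x \<le> length q"
  unfolding KC_def by (rule Least_le) blast

lemma KC_ex: assumes "U q = Some x" shows "\<exists>p. U p = Some x \<and> length p = KC U x"
proof -
  have "\<exists>n p. length p = n \<and> U p = Some x" using assms by blast
  then have "\<exists>p. length p = (LEAST n. \<exists>p. length p = n \<and> U p = Some x) \<and> U p = Some x"
    by (rule LeastI_ex)
  then show ?thesis unfolding KC_def by blast
qed

lemma ident_bound:
  assumes "universal U"
  shows "\<exists>c. \<forall>w. \<exists>q. U q = Some w \<and> length q \<le> length w + c"
proof -
  obtain c where "\<forall>w v. eval (Id 0) [enc w] (enc v) \<longrightarrow> (\<exists>q. U q = Some v \<and> length q \<le> length w + c)"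
    using recf_machine[OF assms] by blast
  moreover have "eval (Id 0) [enc w] (enc w)" for w by (rule id0I) simp
  ultimately show ?thesis by blast
qed

lemma KC_opt:
  assumes "universal U"
  shows "\<exists>p. U p = Some w \<and> length p = KC U w"
  using ident_bound[OF assms] KC_ex by blast

lemma concat_bound:
  assumes "universal U"
  shows "\<exists>c. \<forall>u v. \<exists>k. KC U (u @ v) \<le> KC U u + KC U v + 2 * k + 1 + c \<and> 2 ^ k \<le> KC U u + 1"
proof -
  obtain fU where fU: "\<And>p v. eval fU [enc p] (enc v) \<longleftrightarrow> U p = Some v"
    using assms unfolding universal_def partial_computable_def by blast
  obtain c where c: "\<forall>w v. eval (Fcat fU) [enc w] (enc v) \<longrightarrow> (\<exists>q. U q = Some v \<and> length q \<le> length w + c)"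
    using recf_machine[OF assms] by blast
  have "\<exists>k. KC U (u @ v) \<le> KC U u + KC U v + 2 * k + 1 + c \<and> 2 ^ k \<le> KC U u + 1" for u v
  proof -
    obtain p where p: "U p = Some u" "length p = KC U u" using KC_opt[OF assms] by blast
    obtain q where q: "U q = Some v" "length q = KC U v" using KC_opt[OF assms] by blast
    obtain s where s: "enc s = length p" using enc_surj by blast
    have "eval (Fcat fU) [enc (replicate (length s) True @ False # s @ p @ q)] (enc (u @ v))"
      by (rule FcatI) (use s p q fU in auto)
    then obtain q' where "U q' = Some (u @ v)" "length q' \<le> length (replicate (length s) True @ False # s @ p @ q) + c"
      using c by blast
    then have "KC U (u @ v) \<le> KC U u + KC U v + 2 * length s + 1 + c"
      using KC_le[of U q' "u @ v"] p q by simp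
    moreover have "2 ^ length s \<le> KC U u + 1" using enc_lower[of s] s p by simp
    ultimately show ?thesis by blast
  qed
  then show ?thesis by blast
qed

lemma swap_bound:
  assumes "universal U"
  shows "\<exists>c. \<forall>u v. \<exists>k. KC U (u @ v) \<le> KC U (v @ u) + 2 * k + 1 + c \<and> 2 ^ k \<le> length v + 1"
proof -
  obtain fU where fU: "\<And>p v. eval fU [enc p] (enc v) \<longleftrightarrow> U p = Some v"
    using assms unfolding universal_def partial_computable_def by blast
  obtain c where c: "\<forall>w v. eval (Gsw fU) [enc w] (enc v) \<longrightarrow> (\<exists>q. U q = Some v \<and> length q \<le> length w + c)"
    using recf_machine[OF assms] by blast
  have "\<exists>k. KC U (u @ v) \<le> KC U (v @ u) + 2 * k + 1 + c \<and> 2 ^ k \<le> length v + 1" for u v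
  proof -
    obtain r where r: "U r = Some (v @ u)" "length r = KC U (v @ u)" using KC_opt[OF assms] by blast
    obtain s where s: "enc s = length v" using enc_surj by blast
    have "eval (Gsw fU) [enc (replicate (length s) True @ False # s @ r)] (enc (u @ v))"
      by (rule GswI) (use s r fU in auto)
    then obtain q' where "U q' = Some (u @ v)" "length q' \<le> length (replicate (length s) True @ False # s @ r) + c"
      using c by blast
    then have "KC U (u @ v) \<le> KC U (v @ u) + 2 * length s + 1 + c"
      using KC_le[of U q' "u @ v"] r by simp
    moreover have "2 ^ length s \<le> length v + 1" using enc_lower[of s] s by simp
    ultimately show ?thesis by blast
  qed
  then show ?thesis by blast
qed



lemma len_pre[simp]: "length (pre x n) = n" unfolding pre_def by simp
lemma pre_0[simp]: "pre x 0 = []" unfolding pre_def by simp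

lemma log2_bound: "n \<le> 2 ^ N \<Longrightarrow> log 2 (real n) \<le> real N"
proof (cases "n = 0")
  case True then show ?thesis by (simp add: log_def)
next
  case False
  assume h: "n \<le> 2 ^ N"
  have "log 2 (real n) \<le> log 2 (2 ^ N)"
    using False h by (subst log_le_cancel_iff) auto
  also have "\<dots> = real N" by simp
  finally show ?thesis .
qed

lemma log2_nonneg: "0 \<le> log 2 (real n)"
  by (cases "n = 0") (auto simp: log_def)

lemma indep_bound:
  assumes "indep U x y"
  shows "\<exists>C0\<ge>0. \<forall>n m. real (KC U (pre x n @ pre y m)) \<ge> real (KC U (pre x n)) + real (KC U (pre y m))
     - C0 * (1 + log 2 (real n) + log 2 (real m)) - real (KC U [])"
proof -
  obtain c0 :: real where c0: "\<forall>n m. n \<ge> 1 \<longrightarrow> m \<ge> 1 \<longrightarrow>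
     real (KC U (pre x n @ pre y m)) \<ge> real (KC U (pre x n)) + real (KC U (pre y m))
        - c0 * (1 + log 2 (real n) + log 2 (real m))"
    using assms unfolding indep_def by blast
  have "real (KC U (pre x n @ pre y m)) \<ge> real (KC U (pre x n)) + real (KC U (pre y m))
     - \<bar>c0\<bar> * (1 + log 2 (real n) + log 2 (real m)) - real (KC U [])" for n m
  proof -
    have L: "0 \<le> 1 + log 2 (real n) + log 2 (real m)" using log2_nonneg[of n] log2_nonneg[of m] by linarith
    then have P: "0 \<le> \<bar>c0\<bar> * (1 + log 2 (real n) + log 2 (real m))" by simp
    show ?thesis
    proof (cases "n = 0 \<or> m = 0")
      case True then show ?thesis using P by auto
    next
      case False
      then have "real (KC U (pre x n @ pre y m)) \<ge> real (KC U (pre x n)) + real (KC U (pre y m))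
        - c0 * (1 + log 2 (real n) + log 2 (real m))" using c0 by auto
      moreover have "c0 * (1 + log 2 (real n) + log 2 (real m)) \<le> \<bar>c0\<bar> * (1 + log 2 (real n) + log 2 (real m))"
        using L by (intro mult_right_mono) auto
      ultimately show ?thesis by simp
    qed
  qed
  then show ?thesis by (intro exI[of _ "\<bar>c0\<bar>"]) auto
qed

lemma sum_t:
  fixes t :: "nat \<Rightarrow> nat" and a b :: nat
  assumes "t 1 = a" "\<forall>i\<ge>2. t i = b * (\<Sum>j=1..i-1. t j)" "i \<ge> 1"
  shows "(\<Sum>j=1..i. t j) = a * (b + 1) ^ (i - 1)"
  using assms(3)
proof (induction i rule: dec_induct)
  case base then show ?case using assms(1) by simp
next
  case (step i)
  have "(\<Sum>j=1..Suc i. t j) = (\<Sum>j=1..i. t j) + t (Suc i)" by simp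
  also have "t (Suc i) = b * (\<Sum>j=1..i. t j)" using assms(2) step(1) by auto
  finally have eq: "(\<Sum>j=1..Suc i. t j) = (\<Sum>j=1..i. t j) * (b + 1)" by (simp add: algebra_simps)
  obtain i' where i: "i = Suc i'" using step(1) by (cases i) auto
  show ?case unfolding eq step(3) unfolding i by (simp add: algebra_simps)
qed

lemma growth:
  fixes t :: "nat \<Rightarrow> nat" and a b D :: nat
  assumes "t 1 = a" "\<forall>i\<ge>2. t i = b * (\<Sum>j=1..i-1. t j)"
  shows "\<exists>E. \<forall>i\<ge>1. t i + D \<le> 2 ^ (E * i)"
proof -
  let ?E = "a + D + (b + 1)"
  have "t i + D \<le> 2 ^ (?E * i)" if i1: "i \<ge> 1" for i
  proof -
    have "t i \<le> (\<Sum>j=1..i. t j)" using that by (intro member_le_sum) auto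
    also have "\<dots> = a * (b + 1) ^ (i - 1)" by (rule sum_t[OF assms that])
    finally have "t i + D \<le> a * (b + 1) ^ (i - 1) + D * (b + 1) ^ (i - 1)"
      by (simp add: add_mono)
    also have "\<dots> = (a + D) * (b + 1) ^ (i - 1)" by (simp add: algebra_simps)
    also have "\<dots> \<le> 2 ^ ?E * (2 ^ ?E) ^ (i - 1)"
    proof (rule mult_mono)
      have "a + D < 2 ^ (a + D)" by (rule less_exp)
      also have "\<dots> \<le> 2 ^ ?E" by (intro power_increasing) auto
      finally show "a + D \<le> 2 ^ ?E" by simp
      have "b + 1 < 2 ^ (b + 1)" by (rule less_exp)
      also have "\<dots> \<le> 2 ^ ?E" by (intro power_increasing) auto
      finally show "(b + 1) ^ (i - 1) \<le> (2 ^ ?E) ^ (i - 1)" by (intro power_mono) auto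
    qed auto
    also have "\<dots> = 2 ^ (?E * i)"
    proof -
      obtain i' where i: "i = Suc i'" using i1 by (cases i) auto
      have "(2::nat) ^ ?E * (2 ^ ?E) ^ (i - 1) = (2 ^ ?E) ^ i" unfolding i by simp
      also have "\<dots> = 2 ^ (?E * i)" by (rule power_mult[symmetric])
      finally show ?thesis .
    qed
    finally show ?thesis .
  qed
  then show ?thesis by blast
qed



theorem lemma4p5:
  fixes U :: "bool list \<Rightarrow> bool list option"
    and x y :: "nat \<Rightarrow> bool"
    and \<tau> \<sigma> \<sigma>' :: real
    and a b :: nat
    and t :: "nat \<Rightarrow> nat"
  assumes "universal U"
    and "indep U x y"
    and "\<tau> > 0" and "has_rate U x \<tau>" and "has_rate U y \<tau>"
    and "0 < \<sigma>" and "\<sigma> < \<tau>"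
    and "0 < \<sigma>'" and "\<sigma>' < \<tau> - \<sigma>"
    and "int b = \<lceil>(1 - \<sigma>) / \<sigma>'\<rceil>"
    and "a > 0"
    and "t 0 = 0" and "t 1 = a"
    and "\<forall>i\<ge>2. t i = b * (\<Sum>j=1..i-1. t j)"
  shows "\<exists>c::real. \<forall>i j. i \<ge> 1 \<longrightarrow> j \<ge> 1 \<longrightarrow>
     \<bar>real (KC U (pre y (t i) @ pre x (t j))) - (real (KC U (pre y (t i))) + real (KC U (pre x (t j))))\<bar>
        \<le> c * real (i + j) \<and>
     \<bar>real (KC U (pre x (t i) @ pre y (t j))) - (real (KC U (pre x (t i))) + real (KC U (pre y (t j))))\<bar>
        \<le> c * real (i + j)"
proof -
  note U = assms(1)
  obtain cI where cI: "\<forall>w. \<exists>q. U q = Some w \<and> length q \<le> length w + cI"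
    using ident_bound[OF U] by blast
  have KI: "KC U w \<le> length w + cI" for w
    using cI KC_le by (meson le_trans)
  obtain cC where cC: "\<forall>u v. \<exists>k. KC U (u @ v) \<le> KC U u + KC U v + 2 * k + 1 + cC \<and> 2 ^ k \<le> KC U u + 1"
    using concat_bound[OF U] by blast
  obtain cS where cS: "\<forall>u v. \<exists>k. KC U (u @ v) \<le> KC U (v @ u) + 2 * k + 1 + cS \<and> 2 ^ k \<le> length v + 1"
    using swap_bound[OF U] by blast
  obtain C0 where C0: "C0 \<ge> 0" and ind: "\<forall>n m. real (KC U (pre x n @ pre y m)) \<ge> real (KC U (pre x n)) + real (KC U (pre y m))
     - C0 * (1 + log 2 (real n) + log 2 (real m)) - real (KC U [])"
    using indep_bound[OF assms(2)] by blast
  obtain E where E: "\<forall>i\<ge>1. t i + (cI + 1) \<le> 2 ^ (E * i)"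
    using growth[OF assms(13,14), of "cI + 1"] by blast
  define K0 where "K0 = real (KC U [])"
  have K0: "K0 \<ge> 0" unfolding K0_def by simp
  have F1: "k \<le> E * i" if "i \<ge> 1" "2 ^ k \<le> KC U (pre z (t i)) + 1" for k i z
  proof -
    have "(2::nat) ^ k \<le> t i + cI + 1" using that(2) KI[of "pre z (t i)"] by simp
    also have "\<dots> \<le> 2 ^ (E * i)" using E that(1) by simp
    finally show ?thesis by (rule power_le_imp_le_exp[rotated]) simp
  qed
  have F2: "k \<le> E * i" if "i \<ge> 1" "2 ^ k \<le> length (pre z (t i)) + 1" for k i z
  proof -
    have "(2::nat) ^ k \<le> t i + cI + 1" using that(2) by simp
    also have "\<dots> \<le> 2 ^ (E * i)" using E that(1) by simp
    finally show ?thesis by (rule power_le_imp_le_exp[rotated]) simp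
  qed
  have F3: "log 2 (real (t i)) \<le> real E * real i" if "i \<ge> 1" for i
  proof -
    have "t i \<le> 2 ^ (E * i)" using E that by fastforce
    then show ?thesis using log2_bound by fastforce
  qed
  define c where "c = 2 * real E + 2 + real cC + real cS + C0 + C0 * real E + K0"
  have main: "\<bar>real (KC U (pre y (t i) @ pre x (t j))) - (real (KC U (pre y (t i))) + real (KC U (pre x (t j))))\<bar>
        \<le> c * real (i + j) \<and>
     \<bar>real (KC U (pre x (t i) @ pre y (t j))) - (real (KC U (pre x (t i))) + real (KC U (pre y (t j))))\<bar>
        \<le> c * real (i + j)" if i1: "i \<ge> 1" and j1: "j \<ge> 1" for i j
  proof -
    define I where "I = real i"
    define J where "J = real j"
    define s where "s = I + J"
    have s1: "1 \<le> s" "I \<le> s" "J \<le> s" using i1 j1 unfolding s_def I_def J_def by auto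
    have cs: "c * real (i + j) = 2 * real E * s + 2 * s + real cC * s + real cS * s + C0 * s + C0 * real E * s + K0 * s"
      unfolding c_def s_def I_def J_def by (simp add: algebra_simps)
    have m1: "real E * I \<le> real E * s" "real cC \<le> real cC * s" "real cS \<le> real cS * s" "C0 \<le> C0 * s" "K0 \<le> K0 * s"
      using s1 C0 K0 by (auto intro: mult_left_mono simp: mult_le_cancel_left1)
    have m3: "0 \<le> C0 * real E * s" "0 \<le> real cC" "0 \<le> real cS" using C0 s1 by auto
    have m2: "C0 * real E * I + C0 * real E * J = C0 * real E * s" unfolding s_def by (simp add: algebra_simps)
    have logi: "log 2 (real (t i)) \<le> real E * I" using F3 i1 unfolding I_def by blast
    have logj: "log 2 (real (t j)) \<le> real E * J" using F3 j1 unfolding J_def by blast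
    have CL: "C0 * (1 + log 2 (real (t j)) + log 2 (real (t i))) \<le> C0 + C0 * real E * I + C0 * real E * J"
    proof -
      have "C0 * (1 + log 2 (real (t j)) + log 2 (real (t i))) \<le> C0 * (1 + real E * J + real E * I)"
        using logi logj C0 by (intro mult_left_mono) auto
      then show ?thesis by (simp add: algebra_simps)
    qed
    have CL': "C0 * (1 + log 2 (real (t i)) + log 2 (real (t j))) \<le> C0 + C0 * real E * I + C0 * real E * J"
      using CL by (simp add: add.commute add.left_commute)
    let ?u = "pre x (t i)" and ?v = "pre y (t j)"
    obtain k where k: "KC U (?u @ ?v) \<le> KC U ?u + KC U ?v + 2 * k + 1 + cC" "2 ^ k \<le> KC U ?u + 1"
      using cC by blast
    have kE: "real k \<le> real E * I" using F1[OF i1 k(2)] unfolding I_def by (metis of_nat_le_iff of_nat_mult)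
    have b_up: "real (KC U (?u @ ?v)) \<le> real (KC U ?u) + real (KC U ?v) + 2 * real k + 1 + real cC"
      using k(1) by linarith
    have b_lo: "real (KC U (?u @ ?v)) \<ge> real (KC U ?u) + real (KC U ?v) - C0 * (1 + log 2 (real (t i)) + log 2 (real (t j))) - K0"
      using ind unfolding K0_def by blast
    have B: "\<bar>real (KC U (?u @ ?v)) - (real (KC U ?u) + real (KC U ?v))\<bar> \<le> c * real (i + j)"
      unfolding cs abs_le_iff using b_up b_lo kE m1 m2 m3 CL' s1 C0 K0 by (intro conjI; linarith)
    let ?v2 = "pre y (t i)" and ?u2 = "pre x (t j)"
    obtain k2 where k2: "KC U (?v2 @ ?u2) \<le> KC U ?v2 + KC U ?u2 + 2 * k2 + 1 + cC" "2 ^ k2 \<le> KC U ?v2 + 1"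
      using cC by blast
    have k2E: "real k2 \<le> real E * I" using F1[OF i1 k2(2)] unfolding I_def by (metis of_nat_le_iff of_nat_mult)
    obtain k3 where k3: "KC U (?u2 @ ?v2) \<le> KC U (?v2 @ ?u2) + 2 * k3 + 1 + cS" "2 ^ k3 \<le> length ?v2 + 1"
      using cS by blast
    have k3E: "real k3 \<le> real E * I" using F2[OF i1 k3(2)] unfolding I_def by (metis of_nat_le_iff of_nat_mult)
    have a_up: "real (KC U (?v2 @ ?u2)) \<le> real (KC U ?v2) + real (KC U ?u2) + 2 * real k2 + 1 + real cC"
      using k2(1) by linarith
    have a_sw: "real (KC U (?u2 @ ?v2)) \<le> real (KC U (?v2 @ ?u2)) + 2 * real k3 + 1 + real cS"
      using k3(1) by linarith
    have a_lo: "real (KC U (?u2 @ ?v2)) \<ge> real (KC U ?u2) + real (KC U ?v2) - C0 * (1 + log 2 (real (t j)) + log 2 (real (t i))) - K0"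
      using ind unfolding K0_def by blast
    have A: "\<bar>real (KC U (?v2 @ ?u2)) - (real (KC U ?v2) + real (KC U ?u2))\<bar> \<le> c * real (i + j)"
      unfolding cs abs_le_iff using a_up a_sw a_lo k2E k3E m1 m2 m3 CL s1 C0 K0 by (intro conjI; linarith)
    show ?thesis using A B by blast
  qed
  show ?thesis by (intro exI[of _ c] allI impI) (rule main)
qed

end
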